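(* In the setting described in the context, there exists $\varsigma^2=\mathcal O(R_\beta^2)$ such that for every $\beta$ with $\|\beta-\beta(0)\|_2\le R_\beta$, $$\mathbb E_{\mathrm{init},s,\mathrm d_{\mathcal S},\bar a,s',\mathrm d'_{\mathcal S},\bar a'}\|g_\beta(s,\mathrm d_{\mathcal S},\bar a,s',\mathrm d'_{\mathcal S},\bar a')-\bar g_\beta\|_2^2\le\varsigma^2.$$
   Context: $\mathcal S$ finite, $\mathcal P(\mathcal S)$ distributions $\mathrm d_{\mathcal S}$ on $\mathcal S$, $\overline{\mathcal A}$ finite. Triples $(s,x,\bar a)$ are vectors in $\mathbb R^d$ with $\|(s,x,\bar a)\|_2\le1$. Initialization: independent $u_j\sim\mathrm{Unif}\{\pm1\}$, $\beta_j(0)\sim\mathcal N(0,I_d/d)$, $j\in[m]$ ($\mathbb E_{\mathrm{init}}$ over it; $u$ fixed). $\sigma(y)=\max\{y,0\}$; $f_\beta(s,x,\bar a)=\frac1{\sqrt m}\sum_ju_j\sigma(\beta_j^\top(s,x,\bar a))$; $F_\beta(s,\mathrm d_{\mathcal S},\bar a)=\mathbb E_{x\sim\mathrm d_{\mathcal S}}f_\beta(s,x,\bar a)$; $\nabla_\beta$ uses $\sigma'(y)=\mathbb 1\{y>0\}$. Data: transition kernel $\mathbb P(s',\mathrm d'_{\mathcal S}\mid s,\mathrm d_{\mathcal S},\bar a)$, policy $\pi$, distribution $\rho$ on $(s,\mathrm d_{\mathcal S},\bar a)$; sample $(s,\mathrm d_{\mathcal S},\bar a)\sim\rho$, $(s',\mathrm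 d'_{\mathcal S})\sim\mathbb P(\cdot\mid s,\mathrm d_{\mathcal S},\bar a)$, $\bar a'\sim\pi(\cdot\mid s',\mathrm d'_{\mathcal S})$. Function $\xi$, constants $\tau\ge0$, $\mu\in[0,1)$. $\delta_\beta=F_\beta(s,\mathrm d_{\mathcal S},\bar a)-\tau\xi(s,\mathrm d_{\mathcal S},\bar a)-\mu F_\beta(s',\mathrm d'_{\mathcal S},\bar a')$, $g_\beta=\delta_\beta\nabla_\beta F_\beta(s,\mathrm d_{\mathcal S},\bar a)$, $\bar g_\beta=\mathbb E g_\beta$. Assumption 4: constants $\tau_1,\tau_2,\tau_3\ge0$ with $\xi(s,\mathrm d_{\mathcal S},\bar a)^2\le\tau_1\mathbb E_{x\sim\mathrm d_{\mathcal S}}(f_{\beta(0)}(s,x,\bar a))^2+\tau_2R_\beta^2+\tau_3$ for all arguments. $\mathcal O(\cdot)$ hides constants independent of $R_\beta$ and $m$. *)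

theory Defs
  imports "HOL-Probability.Probability"
begin

text \<open>Vectors in R^d are functions 'd => real ('d finite, d = CARD('d)).
  Distributions on the finite state set 'S are probability vectors 'S => real.
  Parameters beta = (beta_j)_{j<m} are functions nat => 'd => real (only j < m matters).\<close>

definition in_simplex :: "('s::finite \<Rightarrow> real) \<Rightarrow> bool" where
  "in_simplex d \<longleftrightarrow> (\<forall>x. 0 \<le> d x) \<and> (\<Sum>x\<in>UNIV. d x) = 1"

definition inner_d :: "('d::finite \<Rightarrow> real) \<Rightarrow> ('d \<Rightarrow> real) \<Rightarrow> real" where
  "inner_d v w = (\<Sum>i\<in>UNIV. v i * w i)"

definition relu :: "real \<Rightarrow> real" where
  "relu y = max y 0"

definition fnet :: "nat \<Rightarrow> (nat \<Rightarrow> real) \<Rightarrow> (nat \<Rightarrow> 'd::finite \<Rightarrow> real) \<Rightarrow> ('d \<Rightarrow> real) \<Rightarrow> real" where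
  "fnet m u b z = (1 / sqrt (real m)) * (\<Sum>j<m. u j * relu (inner_d (b j) z))"

text \<open>F_beta(s, d_S, a) = E_{x ~ d_S} f_beta(s,x,a); phi embeds triples (s,x,a) into R^d.\<close>
definition Fnet :: "('s::finite \<Rightarrow> 's \<Rightarrow> 'a \<Rightarrow> 'd::finite \<Rightarrow> real) \<Rightarrow> nat \<Rightarrow> (nat \<Rightarrow> real)
    \<Rightarrow> (nat \<Rightarrow> 'd \<Rightarrow> real) \<Rightarrow> 's \<Rightarrow> ('s \<Rightarrow> real) \<Rightarrow> 'a \<Rightarrow> real" where
  "Fnet \<phi> m u b s d a = (\<Sum>x\<in>UNIV. d x * fnet m u b (\<phi> s x a))"

text \<open>Component (j,i) of nabla_beta F_beta(s,d_S,a), using sigma'(y) = 1{y>0}.\<close>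
definition gradF :: "('s::finite \<Rightarrow> 's \<Rightarrow> 'a \<Rightarrow> 'd::finite \<Rightarrow> real) \<Rightarrow> nat \<Rightarrow> (nat \<Rightarrow> real)
    \<Rightarrow> (nat \<Rightarrow> 'd \<Rightarrow> real) \<Rightarrow> 's \<Rightarrow> ('s \<Rightarrow> real) \<Rightarrow> 'a \<Rightarrow> nat \<Rightarrow> 'd \<Rightarrow> real" where
  "gradF \<phi> m u b s d a j i =
     (\<Sum>x\<in>UNIV. d x * ((1 / sqrt (real m)) * u j *
        (if inner_d (b j) (\<phi> s x a) > 0 then 1 else 0) * \<phi> s x a i))"

definition tdelta :: "('s::finite \<Rightarrow> 's \<Rightarrow> 'a \<Rightarrow> 'd::finite \<Rightarrow> real) \<Rightarrow> real \<Rightarrow> real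
    \<Rightarrow> ('s \<times> ('s \<Rightarrow> real) \<times> 'a \<Rightarrow> real) \<Rightarrow> nat \<Rightarrow> (nat \<Rightarrow> real) \<Rightarrow> (nat \<Rightarrow> 'd \<Rightarrow> real)
    \<Rightarrow> ('s \<times> ('s \<Rightarrow> real) \<times> 'a) \<times> ('s \<times> ('s \<Rightarrow> real) \<times> 'a) \<Rightarrow> real" where
  "tdelta \<phi> \<tau> \<mu> \<xi> m u b z =
     (case z of ((s, d, a), (s', d', a')) \<Rightarrow>
        Fnet \<phi> m u b s d a - \<tau> * \<xi> (s, d, a) - \<mu> * Fnet \<phi> m u b s' d' a')"

definition gvec :: "('s::finite \<Rightarrow> 's \<Rightarrow> 'a \<Rightarrow> 'd::finite \<Rightarrow> real) \<Rightarrow> real \<Rightarrow> real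
    \<Rightarrow> ('s \<times> ('s \<Rightarrow> real) \<times> 'a \<Rightarrow> real) \<Rightarrow> nat \<Rightarrow> (nat \<Rightarrow> real) \<Rightarrow> (nat \<Rightarrow> 'd \<Rightarrow> real)
    \<Rightarrow> ('s \<times> ('s \<Rightarrow> real) \<times> 'a) \<times> ('s \<times> ('s \<Rightarrow> real) \<times> 'a) \<Rightarrow> nat \<Rightarrow> 'd \<Rightarrow> real" where
  "gvec \<phi> \<tau> \<mu> \<xi> m u b z j i =
     (case z of ((s, d, a), _) \<Rightarrow> tdelta \<phi> \<tau> \<mu> \<xi> m u b z * gradF \<phi> m u b s d a j i)"

definition triple_space :: "('s::finite \<times> ('s \<Rightarrow> real) \<times> 'a::finite) measure" where
  "triple_space = count_space UNIV \<Otimes>\<^sub>M (borel \<Otimes>\<^sub>M count_space UNIV)"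

definition sd_space :: "('s::finite \<times> ('s \<Rightarrow> real)) measure" where
  "sd_space = count_space UNIV \<Otimes>\<^sub>M borel"

definition data_measure :: "('s::finite \<times> ('s \<Rightarrow> real) \<times> 'a::finite) measure
    \<Rightarrow> ('s \<times> ('s \<Rightarrow> real) \<times> 'a \<Rightarrow> ('s \<times> ('s \<Rightarrow> real)) measure)
    \<Rightarrow> ('s \<times> ('s \<Rightarrow> real) \<Rightarrow> 'a measure)
    \<Rightarrow> (('s \<times> ('s \<Rightarrow> real) \<times> 'a) \<times> ('s \<times> ('s \<Rightarrow> real) \<times> 'a)) measure" where
  "data_measure \<rho> P \<pi> =
     \<rho> \<bind> (\<lambda>t. P t \<bind> (\<lambda>(s', d'). \<pi> (s', d') \<bind>
        (\<lambda>a'. return (triple_space \<Otimes>\<^sub>M triple_space) (t, (s', d', a')))))"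

definition gbar where
  "gbar \<phi> \<tau> \<mu> \<xi> m u b D j i = (\<integral>z. gvec \<phi> \<tau> \<mu> \<xi> m u b z j i \<partial>D)"

definition par_sqnorm :: "nat \<Rightarrow> (nat \<Rightarrow> 'd::finite \<Rightarrow> real) \<Rightarrow> real" where
  "par_sqnorm m v = (\<Sum>j<m. \<Sum>i\<in>UNIV. (v j i)\<^sup>2)"

definition gauss_init :: "('d::finite \<Rightarrow> real) measure" where
  "gauss_init = PiM UNIV (\<lambda>_::'d. density lborel (normal_density 0 (1 / sqrt (real CARD('d)))))"

definition init_measure :: "nat \<Rightarrow> ((nat \<Rightarrow> real) \<times> (nat \<Rightarrow> 'd::finite \<Rightarrow> real)) measure" where
  "init_measure m =
     PiM {..<m} (\<lambda>_. measure_pmf (pmf_of_set {-1, 1::real})) \<Otimes>\<^sub>M PiM {..<m} (\<lambda>_. gauss_init)"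

end

theory Submission
  imports Defs
begin

lemma abs_integral_le_AE:
  fixes f :: "_ \<Rightarrow> real"
  assumes sp: "subprob_space M" and ae: "AE x in M. \<bar>f x\<bar> \<le> c" and c: "0 \<le> c"
  shows "\<bar>\<integral>x. f x \<partial>M\<bar> \<le> c"
proof (cases "integrable M f")
  case True
  interpret subprob_space M by (rule sp)
  have "\<bar>\<integral>x. f x \<partial>M\<bar> \<le> (\<integral>x. \<bar>f x\<bar> \<partial>M)" by (rule integral_abs_bound)
  also have "\<dots> \<le> (\<integral>x. c \<partial>M)"
    using True ae by (intro integral_mono_AE) auto
  also have "\<dots> = c * measure M (space M)" by simp
  also have "\<dots> \<le> c" using c subprob_measure_le_1 by (simp add: mult_left_le)
  finally show ?thesis .
next
  case False
  then show ?thesis using c by (simp add: not_integrable_integral_eq)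
qed

lemma phi_comp_le:
  fixes v :: "'d::finite \<Rightarrow> real"
  assumes "(\<Sum>i\<in>UNIV. (v i)\<^sup>2) \<le> (1::real)"
  shows "\<bar>v i\<bar> \<le> 1"
proof -
  have "(v i)\<^sup>2 \<le> (\<Sum>i\<in>UNIV. (v i)\<^sup>2)" by (rule member_le_sum) auto
  then have "(v i)\<^sup>2 \<le> 1" using assms by linarith
  then show ?thesis by (simp add: abs_square_le_1)
qed

lemma gradF_sq:
  fixes \<phi> :: "'s::finite \<Rightarrow> 's \<Rightarrow> 'a \<Rightarrow> 'd::finite \<Rightarrow> real"
  assumes feat: "\<And>s x a. (\<Sum>i\<in>UNIV. (\<phi> s x a i)\<^sup>2) \<le> 1"
    and d: "in_simplex d" and u: "\<bar>u j\<bar> \<le> 1"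
  shows "(gradF \<phi> m u b s d a j i)\<^sup>2 \<le> 1 / real m"
proof -
  have dn: "\<And>x. 0 \<le> d x" and d1: "(\<Sum>x\<in>UNIV. d x) = 1" using d by (auto simp: in_simplex_def)
  have "\<bar>gradF \<phi> m u b s d a j i\<bar> \<le> (\<Sum>x\<in>UNIV. \<bar>d x * ((1 / sqrt (real m)) * u j *
        (if inner_d (b j) (\<phi> s x a) > 0 then 1 else 0) * \<phi> s x a i)\<bar>)"
    unfolding gradF_def by (rule sum_abs)
  also have "\<dots> \<le> (\<Sum>x\<in>UNIV. d x * (1 / sqrt (real m)))"
  proof (rule sum_mono)
    fix x
    have "\<bar>u j * (if inner_d (b j) (\<phi> s x a) > 0 then 1 else 0) * \<phi> s x a i\<bar> \<le> 1"
      using u phi_comp_le[OF feat[of s x a], of i]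
      by (auto simp: abs_mult intro: mult_le_one)
    then have "\<bar>(1 / sqrt (real m)) * (u j * (if inner_d (b j) (\<phi> s x a) > 0 then 1 else 0) * \<phi> s x a i)\<bar> \<le> 1 / sqrt (real m)"
      using mult_left_le[of "\<bar>u j * (if inner_d (b j) (\<phi> s x a) > 0 then 1 else 0) * \<phi> s x a i\<bar>" "1 / sqrt (real m)"]
      by (simp only: abs_mult abs_divide abs_one real_sqrt_abs2) simp
    moreover have "(1 / sqrt (real m)) * u j * (if inner_d (b j) (\<phi> s x a) > 0 then 1 else 0) * \<phi> s x a i
       = (1 / sqrt (real m)) * (u j * (if inner_d (b j) (\<phi> s x a) > 0 then 1 else 0) * \<phi> s x a i)"
      by (simp only: mult.assoc)
    ultimately have Y: "\<bar>(1 / sqrt (real m)) * u j * (if inner_d (b j) (\<phi> s x a) > 0 then 1 else 0) * \<phi> s x a i\<bar> \<le> 1 / sqrt (real m)"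
      by simp
    show "\<bar>d x * ((1 / sqrt (real m)) * u j *
        (if inner_d (b j) (\<phi> s x a) > 0 then 1 else 0) * \<phi> s x a i)\<bar> \<le> d x * (1 / sqrt (real m))"
      by (subst abs_mult, subst abs_of_nonneg[OF dn[of x]], rule mult_left_mono[OF Y dn[of x]])
  qed
  also have "\<dots> = 1 / sqrt (real m)" using d1 by (simp add: sum_divide_distrib[symmetric])
  finally have h: "\<bar>gradF \<phi> m u b s d a j i\<bar> \<le> 1 / sqrt (real m)" .
  have "(gradF \<phi> m u b s d a j i)\<^sup>2 = \<bar>gradF \<phi> m u b s d a j i\<bar>\<^sup>2" by simp
  also have "\<dots> \<le> (1 / sqrt (real m))\<^sup>2" by (rule power_mono[OF h]) simp
  also have "\<dots> = 1 / real m" by (simp add: power_divide)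
  finally show ?thesis .
qed

lemma Fnet_sq:
  fixes \<phi> :: "'s::finite \<Rightarrow> 's \<Rightarrow> 'a \<Rightarrow> 'd::finite \<Rightarrow> real"
  assumes d: "in_simplex d"
  shows "(Fnet \<phi> m u b s d a)\<^sup>2 \<le> (\<Sum>x\<in>UNIV. (fnet m u b (\<phi> s x a))\<^sup>2)"
proof -
  have dn: "\<And>x. 0 \<le> d x" and d1: "(\<Sum>x\<in>UNIV. d x) = 1" using d by (auto simp: in_simplex_def)
  have dle: "d x \<le> 1" for x
  proof -
    have "d x \<le> (\<Sum>x\<in>UNIV. d x)" by (rule member_le_sum) (auto simp: dn)
    then show ?thesis using d1 by simp
  qed
  have "(Fnet \<phi> m u b s d a)\<^sup>2 \<le> (\<Sum>x\<in>UNIV. (d x)\<^sup>2) * (\<Sum>x\<in>UNIV. (fnet m u b (\<phi> s x a))\<^sup>2)"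
    unfolding Fnet_def by (rule Cauchy_Schwarz_ineq_sum)
  also have "(\<Sum>x\<in>UNIV. (d x)\<^sup>2) \<le> 1"
  proof -
    have "(\<Sum>x\<in>UNIV. (d x)\<^sup>2) \<le> (\<Sum>x\<in>UNIV. d x)"
      by (rule sum_mono) (use dn dle in \<open>simp add: power2_eq_square mult_le_one mult_left_le\<close>)
    then show ?thesis using d1 by simp
  qed
  then have "(\<Sum>x\<in>UNIV. (d x)\<^sup>2) * (\<Sum>x\<in>UNIV. (fnet m u b (\<phi> s x a))\<^sup>2) \<le> (\<Sum>x\<in>UNIV. (fnet m u b (\<phi> s x a))\<^sup>2)"
    by (simp add: mult_left_le_one_le sum_nonneg)
  finally show ?thesis .
qed

lemma relu_lip: "\<bar>relu a - relu b\<bar> \<le> \<bar>a - b\<bar>"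
  unfolding relu_def by auto

lemma inner_d_diff: "inner_d x v - inner_d y v = inner_d (\<lambda>i. x i - y i) v"
  by (simp add: inner_d_def sum_subtractf left_diff_distrib)

lemma inner_d_sq: "(inner_d x v)\<^sup>2 \<le> (\<Sum>i\<in>UNIV. (x i)\<^sup>2) * (\<Sum>i\<in>UNIV. (v i)\<^sup>2)"
  unfolding inner_d_def by (rule Cauchy_Schwarz_ineq_sum)

lemma fnet_lip:
  fixes v :: "'d::finite \<Rightarrow> real"
  assumes u: "\<forall>j<m. \<bar>u j\<bar> \<le> 1" and v: "(\<Sum>i\<in>UNIV. (v i)\<^sup>2) \<le> 1"
  shows "(fnet m u B v - fnet m u b v)\<^sup>2 \<le> par_sqnorm m (\<lambda>j i. B j i - b j i)"
proof (cases "m = 0")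
  case True then show ?thesis by (simp add: fnet_def par_sqnorm_def)
next
  case False
  define a where "a j = \<bar>inner_d (\<lambda>i. B j i - b j i) v\<bar>" for j
  define D where "D j = (\<Sum>i\<in>UNIV. (B j i - b j i)\<^sup>2)" for j
  have diff: "fnet m u B v - fnet m u b v = (1 / sqrt (real m)) * (\<Sum>j<m. u j * (relu (inner_d (B j) v) - relu (inner_d (b j) v)))"
    by (simp add: fnet_def sum_subtractf right_diff_distrib del: times_divide_eq_left divide_const_simps)
  have S: "\<bar>\<Sum>j<m. u j * (relu (inner_d (B j) v) - relu (inner_d (b j) v))\<bar> \<le> (\<Sum>j<m. a j)"
  proof -
    have "\<bar>\<Sum>j<m. u j * (relu (inner_d (B j) v) - relu (inner_d (b j) v))\<bar>
        \<le> (\<Sum>j<m. \<bar>u j * (relu (inner_d (B j) v) - relu (inner_d (b j) v))\<bar>)" by (rule sum_abs)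
    also have "\<dots> \<le> (\<Sum>j<m. a j)"
    proof (rule sum_mono)
      fix j assume "j \<in> {..<m}"
      then have "\<bar>u j\<bar> \<le> 1" using u by auto
      moreover have "\<bar>relu (inner_d (B j) v) - relu (inner_d (b j) v)\<bar> \<le> a j"
        unfolding a_def inner_d_diff[symmetric] by (rule relu_lip)
      ultimately show "\<bar>u j * (relu (inner_d (B j) v) - relu (inner_d (b j) v))\<bar> \<le> a j"
        using mult_mono[of "\<bar>u j\<bar>" 1 "\<bar>relu (inner_d (B j) v) - relu (inner_d (b j) v)\<bar>" "a j"]
        by (simp add: abs_mult)
    qed
    finally show ?thesis .
  qed
  have a0: "0 \<le> a j" for j by (simp add: a_def)
  have aD: "(a j)\<^sup>2 \<le> D j" for j
  proof -
    have "(a j)\<^sup>2 \<le> D j * (\<Sum>i\<in>UNIV. (v i)\<^sup>2)" unfolding a_def D_def by (simp add: inner_d_sq)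
    also have "\<dots> \<le> D j" using v by (simp add: D_def mult_left_le sum_nonneg)
    finally show ?thesis .
  qed
  have CS: "(\<Sum>j<m. a j)\<^sup>2 \<le> real m * (\<Sum>j<m. (a j)\<^sup>2)"
    using Cauchy_Schwarz_ineq_sum[of "\<lambda>_. 1" "\<lambda>j. a j" "{..<m}"] by simp
  have "(fnet m u B v - fnet m u b v)\<^sup>2 = (1 / real m) * (\<Sum>j<m. u j * (relu (inner_d (B j) v) - relu (inner_d (b j) v)))\<^sup>2"
    unfolding diff by (simp add: power_mult_distrib power_divide)
  also have "\<dots> \<le> (1 / real m) * (\<Sum>j<m. a j)\<^sup>2"
  proof -
    have "(\<Sum>j<m. u j * (relu (inner_d (B j) v) - relu (inner_d (b j) v)))\<^sup>2 \<le> (\<Sum>j<m. a j)\<^sup>2"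
      using power_mono[OF S abs_ge_zero, of 2] by simp
    then show ?thesis by (intro mult_left_mono) auto
  qed
  also have "\<dots> \<le> (1 / real m) * (real m * (\<Sum>j<m. (a j)\<^sup>2))"
    using CS by (intro mult_left_mono) auto
  also have "\<dots> = (\<Sum>j<m. (a j)\<^sup>2)" using False by simp
  also have "\<dots> \<le> (\<Sum>j<m. D j)" by (rule sum_mono) (rule aD)
  also have "\<dots> = par_sqnorm m (\<lambda>j i. B j i - b j i)" by (simp add: D_def par_sqnorm_def)
  finally show ?thesis .
qed

lemma sq3: "((x::real) - y - w)\<^sup>2 \<le> 3 * (x\<^sup>2 + y\<^sup>2 + w\<^sup>2)"
proof -
  have "3 * (x\<^sup>2 + y\<^sup>2 + w\<^sup>2) - (x - y - w)\<^sup>2 = (x + y)\<^sup>2 + (x + w)\<^sup>2 + (y - w)\<^sup>2"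
    by (simp add: power2_eq_square algebra_simps)
  moreover have "0 \<le> (x + y)\<^sup>2 + (x + w)\<^sup>2 + (y - w)\<^sup>2" by simp
  ultimately show ?thesis by linarith
qed

lemma inner_bound:
  fixes \<phi> :: "'s::finite \<Rightarrow> 's \<Rightarrow> 'a::finite \<Rightarrow> 'd::finite \<Rightarrow> real"
    and D :: "(('s \<times> ('s \<Rightarrow> real) \<times> 'a) \<times> ('s \<times> ('s \<Rightarrow> real) \<times> 'a)) measure"
  assumes feat: "\<And>s x a. (\<Sum>i\<in>UNIV. (\<phi> s x a i)\<^sup>2) \<le> 1"
    and sp: "subprob_space D"
    and AE_D: "AE z in D. in_simplex (fst (snd (fst z))) \<and> in_simplex (fst (snd (snd z)))"
    and u: "\<forall>j<m. \<bar>u j\<bar> \<le> 1"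
    and xi: "\<forall>s d a. in_simplex d \<longrightarrow> (\<xi> (s, d, a))\<^sup>2 \<le> X"
    and mu: "\<bar>\<mu>\<bar> \<le> 1"
    and T: "\<forall>s a. (\<Sum>x\<in>UNIV. (fnet m u b (\<phi> s x a))\<^sup>2) \<le> T"
    and X0: "0 \<le> X" and T0: "0 \<le> T"
  shows "(\<integral>\<^sup>+ z. ennreal (par_sqnorm m (\<lambda>j i. gvec \<phi> \<tau> \<mu> \<xi> m u b z j i - gbar \<phi> \<tau> \<mu> \<xi> m u b D j i)) \<partial>D)
     \<le> ennreal (4 * real CARD('d) * (3 * (2 * T + \<tau>\<^sup>2 * X)))"
proof -
  define K where "K = 3 * (2 * T + \<tau>\<^sup>2 * X)"
  have K0: "0 \<le> K" using X0 T0 by (simp add: K_def)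
  have step1: "(tdelta \<phi> \<tau> \<mu> \<xi> m u b z)\<^sup>2 \<le> K"
    if z: "in_simplex (fst (snd (fst z))) \<and> in_simplex (fst (snd (snd z)))" for z
  proof -
    obtain s d a s' d' a' where zz: "z = ((s, d, a), (s', d', a'))" by (metis prod.exhaust)
    have d: "in_simplex d" and d': "in_simplex d'" using z zz by auto
    have F: "(Fnet \<phi> m u b s d a)\<^sup>2 \<le> T" using order_trans[OF Fnet_sq[OF d] T[rule_format]] .
    have F': "(Fnet \<phi> m u b s' d' a')\<^sup>2 \<le> T" using order_trans[OF Fnet_sq[OF d'] T[rule_format]] .
    have Xi: "(\<tau> * \<xi> (s, d, a))\<^sup>2 \<le> \<tau>\<^sup>2 * X"
      using xi d by (simp add: power_mult_distrib mult_left_mono)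
    have Mu: "(\<mu> * Fnet \<phi> m u b s' d' a')\<^sup>2 \<le> T"
    proof -
      have "\<mu>\<^sup>2 \<le> 1" using mu by (simp add: abs_square_le_1)
      then have "\<mu>\<^sup>2 * (Fnet \<phi> m u b s' d' a')\<^sup>2 \<le> 1 * (Fnet \<phi> m u b s' d' a')\<^sup>2"
        by (intro mult_right_mono) auto
      then show ?thesis using F' by (simp add: power_mult_distrib)
    qed
    have "(tdelta \<phi> \<tau> \<mu> \<xi> m u b z)\<^sup>2 \<le> 3 * ((Fnet \<phi> m u b s d a)\<^sup>2 + (\<tau> * \<xi> (s, d, a))\<^sup>2 + (\<mu> * Fnet \<phi> m u b s' d' a')\<^sup>2)"
      unfolding zz tdelta_def using sq3 by simp
    also have "\<dots> \<le> K" using F Xi Mu by (simp add: K_def)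
    finally show ?thesis .
  qed
  have step2: "(gvec \<phi> \<tau> \<mu> \<xi> m u b z j i)\<^sup>2 \<le> K / real m"
    if z: "in_simplex (fst (snd (fst z))) \<and> in_simplex (fst (snd (snd z)))" and j: "j < m" for z j i
  proof -
    obtain s d a s' d' a' where zz: "z = ((s, d, a), (s', d', a'))" by (metis prod.exhaust)
    have d: "in_simplex d" using z zz by auto
    have g: "(gradF \<phi> m u b s d a j i)\<^sup>2 \<le> 1 / real m"
      using gradF_sq[of \<phi>, OF feat d] u j by auto
    have "(gvec \<phi> \<tau> \<mu> \<xi> m u b z j i)\<^sup>2 = (tdelta \<phi> \<tau> \<mu> \<xi> m u b z)\<^sup>2 * (gradF \<phi> m u b s d a j i)\<^sup>2"
      unfolding gvec_def zz by (simp add: power_mult_distrib)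
    also have "\<dots> \<le> K * (1 / real m)"
      using step1[OF z] g K0 by (intro mult_mono) auto
    finally show ?thesis by simp
  qed
  have step3: "\<bar>gbar \<phi> \<tau> \<mu> \<xi> m u b D j i\<bar> \<le> sqrt (K / real m)" if j: "j < m" for j i
    unfolding gbar_def
  proof (rule abs_integral_le_AE[OF sp])
    show "AE z in D. \<bar>gvec \<phi> \<tau> \<mu> \<xi> m u b z j i\<bar> \<le> sqrt (K / real m)"
      using AE_D
    proof eventually_elim
      case (elim z)
      show ?case using step2[OF elim j, of i] by (simp add: real_le_rsqrt)
    qed
  qed (simp add: K0)
  have step4: "par_sqnorm m (\<lambda>j i. gvec \<phi> \<tau> \<mu> \<xi> m u b z j i - gbar \<phi> \<tau> \<mu> \<xi> m u b D j i) \<le> 4 * real CARD('d) * K"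
    if z: "in_simplex (fst (snd (fst z))) \<and> in_simplex (fst (snd (snd z)))" for z
  proof (cases "m = 0")
    case True then show ?thesis using K0 by (simp add: par_sqnorm_def)
  next
    case False
    have elem: "(gvec \<phi> \<tau> \<mu> \<xi> m u b z j i - gbar \<phi> \<tau> \<mu> \<xi> m u b D j i)\<^sup>2 \<le> 4 * (K / real m)"
      if j: "j < m" for j i
    proof -
      have a: "(gvec \<phi> \<tau> \<mu> \<xi> m u b z j i)\<^sup>2 \<le> K / real m" by (rule step2[OF z j])
      have "\<bar>gbar \<phi> \<tau> \<mu> \<xi> m u b D j i\<bar>\<^sup>2 \<le> (sqrt (K / real m))\<^sup>2"
        by (rule power_mono[OF step3[OF j]]) simp
      then have b: "(gbar \<phi> \<tau> \<mu> \<xi> m u b D j i)\<^sup>2 \<le> K / real m" using K0 by simp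
      have "(gvec \<phi> \<tau> \<mu> \<xi> m u b z j i - gbar \<phi> \<tau> \<mu> \<xi> m u b D j i)\<^sup>2
          \<le> 2 * (gvec \<phi> \<tau> \<mu> \<xi> m u b z j i)\<^sup>2 + 2 * (gbar \<phi> \<tau> \<mu> \<xi> m u b D j i)\<^sup>2"
        using sum_squares_ge_zero[of "gvec \<phi> \<tau> \<mu> \<xi> m u b z j i + gbar \<phi> \<tau> \<mu> \<xi> m u b D j i" 0]
        by (simp add: power2_eq_square algebra_simps)
      also have "\<dots> \<le> 4 * (K / real m)" using a b by simp
      finally show ?thesis .
    qed
    have "par_sqnorm m (\<lambda>j i. gvec \<phi> \<tau> \<mu> \<xi> m u b z j i - gbar \<phi> \<tau> \<mu> \<xi> m u b D j i)
        \<le> (\<Sum>j<m. \<Sum>i\<in>(UNIV::'d set). 4 * (K / real m))"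
      unfolding par_sqnorm_def by (rule sum_mono, rule sum_mono, rule elem, simp)
    also have "\<dots> = 4 * real CARD('d) * K" using False by simp
    finally show ?thesis .
  qed
  have "(\<integral>\<^sup>+ z. ennreal (par_sqnorm m (\<lambda>j i. gvec \<phi> \<tau> \<mu> \<xi> m u b z j i - gbar \<phi> \<tau> \<mu> \<xi> m u b D j i)) \<partial>D)
      \<le> (\<integral>\<^sup>+ z. ennreal (4 * real CARD('d) * K) \<partial>D)"
    apply (rule nn_integral_mono_AE)
    using AE_D by eventually_elim (rule ennreal_leI, rule step4)
  also have "\<dots> = ennreal (4 * real CARD('d) * K) * emeasure D (space D)" by simp
  also have "\<dots> \<le> ennreal (4 * real CARD('d) * K) * 1"
    using subprob_space.emeasure_space_le_1[OF sp] by (intro mult_left_mono) auto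
  finally show ?thesis by (simp add: K_def)
qed

lemma normal_sq:
  assumes s: "0 < \<sigma>"
  shows "(\<integral>\<^sup>+ y. ennreal (y\<^sup>2) \<partial>density lborel (normal_density 0 \<sigma>)) = ennreal (\<sigma>\<^sup>2)"
proof -
  have hb: "has_bochner_integral lborel (\<lambda>x. normal_density 0 \<sigma> x * (x - 0) ^ (2 * 1)) (fact (2 * 1) / ((2 / \<sigma>\<^sup>2)^1 * fact 1))"
    using normal_moment_even[OF s] .
  have hb': "has_bochner_integral lborel (\<lambda>x. normal_density 0 \<sigma> x * x\<^sup>2) (\<sigma>\<^sup>2)"
    using hb s by (simp add: power2_eq_square)
  have "(\<integral>\<^sup>+ y. ennreal (y\<^sup>2) \<partial>density lborel (normal_density 0 \<sigma>)) = (\<integral>\<^sup>+ y. ennreal (normal_density 0 \<sigma> y) * ennreal (y\<^sup>2) \<partial>lborel)"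
    by (subst nn_integral_density) auto
  also have "\<dots> = (\<integral>\<^sup>+ y. ennreal (normal_density 0 \<sigma> y * y\<^sup>2) \<partial>lborel)"
    by (simp add: ennreal_mult)
  also have "\<dots> = ennreal (\<sigma>\<^sup>2)"
    using hb' by (subst nn_integral_eq_integral) (auto simp: has_bochner_integral_iff)
  finally show ?thesis .
qed

lemma gauss_sq:
  "(\<integral>\<^sup>+ x. ennreal ((x i)\<^sup>2) \<partial>(gauss_init :: ('d::finite \<Rightarrow> real) measure)) = ennreal (1 / real CARD('d))"
proof -
  let ?N = "density lborel (normal_density 0 (1 / sqrt (real CARD('d))))"
  have c0: "0 < 1 / sqrt (real CARD('d))" using zero_less_card_finite[where 'a='d] by simp
  have ps: "prob_space ?N" by (rule prob_space_normal_density[OF c0])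
  have "distr (gauss_init :: ('d \<Rightarrow> real) measure) ?N (\<lambda>x. x i) = ?N"
    unfolding gauss_init_def by (rule distr_PiM_component) (auto simp: ps)
  then have "(\<integral>\<^sup>+ x. ennreal ((x i)\<^sup>2) \<partial>(gauss_init :: ('d::finite \<Rightarrow> real) measure))
     = (\<integral>\<^sup>+ y. ennreal (y\<^sup>2) \<partial>distr (gauss_init :: ('d \<Rightarrow> real) measure) ?N (\<lambda>x. x i))"
    by (subst nn_integral_distr) (auto simp: gauss_init_def)
  also have "\<dots> = ennreal ((1 / sqrt (real CARD('d)))\<^sup>2)"
    using \<open>distr _ _ _ = ?N\<close> by (simp only:) (rule normal_sq[OF c0])
  finally show ?thesis by (simp add: power_divide)
qed

lemma prob_gauss_init: "prob_space (gauss_init :: ('d::finite \<Rightarrow> real) measure)"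
proof -
  have c0: "0 < 1 / sqrt (real CARD('d))" using zero_less_card_finite[where 'a='d] by simp
  show ?thesis unfolding gauss_init_def
    by (rule prob_space_PiM) (rule prob_space_normal_density[OF c0])
qed

lemma gauss_comp:
  assumes j: "j < m"
  shows "(\<integral>\<^sup>+ b. ennreal ((b j i)\<^sup>2) \<partial>(PiM {..<m} (\<lambda>_. gauss_init :: ('d::finite \<Rightarrow> real) measure)))
     = ennreal (1 / real CARD('d))"
proof -
  have "distr (PiM {..<m} (\<lambda>_. gauss_init :: ('d \<Rightarrow> real) measure)) gauss_init (\<lambda>b. b j) = gauss_init"
    by (rule distr_PiM_component) (auto simp: prob_gauss_init j)
  then have "(\<integral>\<^sup>+ b. ennreal ((b j i)\<^sup>2) \<partial>(PiM {..<m} (\<lambda>_. gauss_init :: ('d::finite \<Rightarrow> real) measure)))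
     = (\<integral>\<^sup>+ x. ennreal ((x i)\<^sup>2) \<partial>distr (PiM {..<m} (\<lambda>_. gauss_init :: ('d \<Rightarrow> real) measure)) gauss_init (\<lambda>b. b j))"
    using j by (subst nn_integral_distr) (auto simp: gauss_init_def)
  also have "\<dots> = ennreal (1 / real CARD('d))"
    using \<open>distr _ _ _ = _\<close> gauss_sq by simp
  finally show ?thesis .
qed

abbreviation "Umeas (m::nat) \<equiv> PiM {..<m} (\<lambda>_. measure_pmf (pmf_of_set {-1, 1::real}))"

lemma rad_moment:
  assumes j: "j < m" and k: "k < m"
  shows "integrable (Umeas m) (\<lambda>u. u j * u k) \<and> (\<integral>u. u j * u k \<partial>Umeas m) = (if j = k then 1 else 0)"
proof -
  interpret P: product_prob_space "\<lambda>_::nat. measure_pmf (pmf_of_set {-1, 1::real})" "{..<m}"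
    by unfold_locales
  define f where "f i x = (if i = j then x else 1) * (if i = k then x else (1::real))" for i x
  have prod: "(\<Prod>i\<in>{..<m}. f i (u i)) = u j * u k" for u
  proof (cases "j = k")
    case True
    have "(\<Prod>i\<in>{..<m}. f i (u i)) = (\<Prod>i\<in>{..<m}. if i = j then u j * u j else 1)"
      by (rule prod.cong) (auto simp: f_def True)
    also have "\<dots> = u j * u j" using j by (simp add: prod.delta)
    finally show ?thesis using True by simp
  next
    case False
    have "(\<Prod>i\<in>{..<m}. f i (u i)) = (\<Prod>i\<in>{..<m}. (if i = j then u j else 1) * (if i = k then u k else 1))"
      by (rule prod.cong) (auto simp: f_def)
    also have "\<dots> = u j * u k" using j k by (simp add: prod.distrib prod.delta)
    finally show ?thesis .
  qed
  have int: "integrable (measure_pmf (pmf_of_set {-1, 1::real})) (f i)" for i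
    by (rule integrable_measure_pmf_finite) simp
  have "integrable (Umeas m) (\<lambda>u. \<Prod>i\<in>{..<m}. f i (u i))"
    by (rule P.product_integrable_prod) (auto simp: int)
  then have I: "integrable (Umeas m) (\<lambda>u. u j * u k)" by (simp add: prod)
  have "(\<integral>u. u j * u k \<partial>Umeas m) = (\<integral>u. (\<Prod>i\<in>{..<m}. f i (u i)) \<partial>Umeas m)" by (simp add: prod)
  also have "\<dots> = (\<Prod>i\<in>{..<m}. \<integral>x. f i x \<partial>measure_pmf (pmf_of_set {-1, 1::real}))"
    by (rule P.product_integral_prod) (auto simp: int)
  also have "\<dots> = (\<Prod>i\<in>{..<m}. (f i (-1) + f i 1) / 2)"
    by (rule prod.cong) (auto simp: integral_pmf_of_set)
  also have "\<dots> = (if j = k then 1 else 0)"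
  proof (cases "j = k")
    case True
    have "(\<Prod>i\<in>{..<m}. (f i (-1) + f i 1) / 2) = (\<Prod>i\<in>{..<m}. 1)"
      by (rule prod.cong) (auto simp: f_def True)
    then show ?thesis using True by simp
  next
    case False
    have "(f j (-1) + f j 1) / 2 = 0" using False by (simp add: f_def)
    then have "(\<Prod>i\<in>{..<m}. (f i (-1) + f i 1) / 2) = 0"
      using j by (intro prod_zero) auto
    then show ?thesis using False by simp
  qed
  finally show ?thesis using I by simp
qed

lemma rad_sq:
  fixes c :: "nat \<Rightarrow> real"
  shows "(\<integral>\<^sup>+ u. ennreal ((\<Sum>j<m. u j * c j)\<^sup>2) \<partial>Umeas m) = ennreal (\<Sum>j<m. (c j)\<^sup>2)"
proof -
  have eq: "(\<Sum>j<m. u j * c j)\<^sup>2 = (\<Sum>j<m. \<Sum>k<m. (c j * c k) * (u j * u k))" for u :: "nat \<Rightarrow> real"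
    by (simp add: power2_eq_square sum_product algebra_simps)
  have int1: "integrable (Umeas m) (\<lambda>u. (c j * c k) * (u j * u k))" if "j < m" "k < m" for j k
    using rad_moment[OF that] by simp
  have int2: "integrable (Umeas m) (\<lambda>u. \<Sum>k<m. (c j * c k) * (u j * u k))" if "j < m" for j
    by (rule Bochner_Integration.integrable_sum) (use int1 that in blast)
  have int: "integrable (Umeas m) (\<lambda>u. \<Sum>j<m. \<Sum>k<m. (c j * c k) * (u j * u k))"
    by (rule Bochner_Integration.integrable_sum) (use int2 in blast)
  have "(\<integral>\<^sup>+ u. ennreal ((\<Sum>j<m. u j * c j)\<^sup>2) \<partial>Umeas m)
      = (\<integral>\<^sup>+ u. ennreal (\<Sum>j<m. \<Sum>k<m. (c j * c k) * (u j * u k)) \<partial>Umeas m)"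
    by (simp only: eq)
  also have "\<dots> = ennreal (\<integral>u. (\<Sum>j<m. \<Sum>k<m. (c j * c k) * (u j * u k)) \<partial>Umeas m)"
    using int by (rule nn_integral_eq_integral) (simp add: eq[symmetric])
  also have "(\<integral>u. (\<Sum>j<m. \<Sum>k<m. (c j * c k) * (u j * u k)) \<partial>Umeas m)
      = (\<Sum>j<m. \<Sum>k<m. (c j * c k) * (if j = k then 1 else 0))"
    using rad_moment int1 int2 by (simp add: integral_sum)
  also have "\<dots> = (\<Sum>j<m. (c j)\<^sup>2)"
    by (simp add: power2_eq_square if_distrib cong: if_cong)
  finally show ?thesis .
qed

lemma meas_pmf_borel: "(\<lambda>x::real. x) \<in> measurable (measure_pmf p) borel"
proof -
  have "sets (measure_pmf p) = sets (count_space UNIV)" by simp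
  then show ?thesis by (simp add: measurable_cong_sets[OF _ refl] measurable_count_space_eq1)
qed

lemma mU[measurable]: "(\<lambda>w. fst w j) \<in> borel_measurable (init_measure m :: ((nat \<Rightarrow> real) \<times> (nat \<Rightarrow> 'd::finite \<Rightarrow> real)) measure)"
proof (cases "j < m")
  case True
  have "(\<lambda>u. u j) \<in> measurable (Umeas m) (measure_pmf (pmf_of_set {-1, 1::real}))"
    using True by (intro measurable_component_singleton) auto
  then have "(\<lambda>u. u j) \<in> borel_measurable (Umeas m)"
    using measurable_compose[OF _ meas_pmf_borel] by blast
  then show ?thesis unfolding init_measure_def
    by (rule measurable_compose[OF measurable_fst])
next
  case False
  have "(\<lambda>w. fst w j) \<in> borel_measurable (init_measure m :: ((nat \<Rightarrow> real) \<times> (nat \<Rightarrow> 'd::finite \<Rightarrow> real)) measure)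
     \<longleftrightarrow> (\<lambda>w. undefined :: real) \<in> borel_measurable (init_measure m :: ((nat \<Rightarrow> real) \<times> (nat \<Rightarrow> 'd::finite \<Rightarrow> real)) measure)"
    using False by (intro Sigma_Algebra.measurable_cong) (auto simp: init_measure_def space_pair_measure space_PiM PiE_def extensional_def)
  then show ?thesis by simp
qed

lemma mB[measurable]: "(\<lambda>w. snd w j i) \<in> borel_measurable (init_measure m :: ((nat \<Rightarrow> real) \<times> (nat \<Rightarrow> 'd::finite \<Rightarrow> real)) measure)"
proof (cases "j < m")
  case True
  have "(\<lambda>b. b j) \<in> measurable (PiM {..<m} (\<lambda>_. gauss_init :: ('d \<Rightarrow> real) measure)) gauss_init"
    using True by (intro measurable_component_singleton) auto
  moreover have "(\<lambda>x. x i) \<in> borel_measurable (gauss_init :: ('d \<Rightarrow> real) measure)"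
    unfolding gauss_init_def
    by (rule measurable_compose[OF measurable_component_singleton]) (auto simp: measurable_cong_sets[OF sets_density refl])
  ultimately have "(\<lambda>b. b j i) \<in> borel_measurable (PiM {..<m} (\<lambda>_. gauss_init :: ('d \<Rightarrow> real) measure))"
    by (rule measurable_compose[where f="\<lambda>b. b j" and g="\<lambda>x. x i"])
  then show ?thesis unfolding init_measure_def
    by (rule measurable_compose[OF measurable_snd])
next
  case False
  have "(\<lambda>w. snd w j i) \<in> borel_measurable (init_measure m :: ((nat \<Rightarrow> real) \<times> (nat \<Rightarrow> 'd::finite \<Rightarrow> real)) measure)
     \<longleftrightarrow> (\<lambda>w. undefined i :: real) \<in> borel_measurable (init_measure m :: ((nat \<Rightarrow> real) \<times> (nat \<Rightarrow> 'd::finite \<Rightarrow> real)) measure)"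
    using False by (intro Sigma_Algebra.measurable_cong) (auto simp: init_measure_def space_pair_measure space_PiM PiE_def extensional_def)
  then show ?thesis by simp
qed

lemma fnet_meas[measurable]:
  "(\<lambda>w. fnet m (fst w) (snd w) v) \<in> borel_measurable (init_measure m :: ((nat \<Rightarrow> real) \<times> (nat \<Rightarrow> 'd::finite \<Rightarrow> real)) measure)"
  unfolding fnet_def relu_def inner_d_def
  by measurable

lemma mG: "(\<lambda>b. b j i) \<in> borel_measurable (PiM {..<m} (\<lambda>_. gauss_init :: ('d::finite \<Rightarrow> real) measure))"
proof (cases "j < m")
  case True
  have "(\<lambda>b. b j) \<in> measurable (PiM {..<m} (\<lambda>_. gauss_init :: ('d \<Rightarrow> real) measure)) gauss_init"
    using True by (intro measurable_component_singleton) auto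
  moreover have "(\<lambda>x. x i) \<in> borel_measurable (gauss_init :: ('d \<Rightarrow> real) measure)"
    unfolding gauss_init_def
    by (rule measurable_compose[OF measurable_component_singleton]) (auto simp: measurable_cong_sets[OF sets_density refl])
  ultimately show ?thesis
    by (rule measurable_compose[where f="\<lambda>b. b j" and g="\<lambda>x. x i"])
next
  case False
  have "(\<lambda>b. b j i) \<in> borel_measurable (PiM {..<m} (\<lambda>_. gauss_init :: ('d::finite \<Rightarrow> real) measure))
     \<longleftrightarrow> (\<lambda>b. undefined i :: real) \<in> borel_measurable (PiM {..<m} (\<lambda>_. gauss_init :: ('d::finite \<Rightarrow> real) measure))"
    using False by (intro Sigma_Algebra.measurable_cong) (auto simp: space_PiM PiE_def extensional_def)
  then show ?thesis by simp
qed

lemma fnet_init: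
  fixes v :: "'d::finite \<Rightarrow> real"
  assumes v: "(\<Sum>i\<in>UNIV. (v i)\<^sup>2) \<le> 1"
  shows "(\<integral>\<^sup>+ w. ennreal ((fnet m (fst w) (snd w) v)\<^sup>2) \<partial>(init_measure m :: ((nat \<Rightarrow> real) \<times> (nat \<Rightarrow> 'd \<Rightarrow> real)) measure)) \<le> 1"
proof -
  let ?G = "PiM {..<m} (\<lambda>_. gauss_init :: ('d \<Rightarrow> real) measure)"
  have pU: "prob_space (Umeas m)" by (rule prob_space_PiM) (rule prob_space_measure_pmf)
  have pG: "prob_space ?G" by (rule prob_space_PiM) (rule prob_gauss_init)
  interpret U: sigma_finite_measure "Umeas m"
    using pU by (simp add: prob_space_imp_subprob_space subprob_space_imp_sigma_finite)
  interpret G: sigma_finite_measure ?G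
    using pG by (simp add: prob_space_imp_subprob_space subprob_space_imp_sigma_finite)
  interpret P: pair_sigma_finite "Umeas m" ?G by unfold_locales
  define c where "c b j = relu (inner_d (b j) v) / sqrt (real m)" for b :: "nat \<Rightarrow> 'd \<Rightarrow> real" and j
  have fc: "fnet m u b v = (\<Sum>j<m. u j * c b j)" for u b
    by (simp add: fnet_def c_def sum_distrib_left)
  have meas: "(\<lambda>w. ennreal ((fnet m (fst w) (snd w) v)\<^sup>2)) \<in> borel_measurable (Umeas m \<Otimes>\<^sub>M ?G)"
    using fnet_meas[of m v] unfolding init_measure_def by measurable
  have cb: "(c b j)\<^sup>2 \<le> (\<Sum>i\<in>UNIV. (b j i)\<^sup>2 / real m)" for b j
  proof -
    have "(relu (inner_d (b j) v))\<^sup>2 \<le> (inner_d (b j) v)\<^sup>2"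
      unfolding relu_def by (cases "inner_d (b j) v \<ge> 0") (auto simp: max_def)
    also have "\<dots> \<le> (\<Sum>i\<in>UNIV. (b j i)\<^sup>2) * (\<Sum>i\<in>UNIV. (v i)\<^sup>2)" by (rule inner_d_sq)
    also have "\<dots> \<le> (\<Sum>i\<in>UNIV. (b j i)\<^sup>2)" using v by (simp add: mult_left_le sum_nonneg)
    finally have "(relu (inner_d (b j) v))\<^sup>2 / real m \<le> (\<Sum>i\<in>UNIV. (b j i)\<^sup>2) / real m"
      by (simp add: divide_right_mono)
    then show ?thesis by (simp add: c_def power_divide sum_divide_distrib)
  qed
  have "(\<integral>\<^sup>+ w. ennreal ((fnet m (fst w) (snd w) v)\<^sup>2) \<partial>(init_measure m :: ((nat \<Rightarrow> real) \<times> (nat \<Rightarrow> 'd \<Rightarrow> real)) measure))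
      = (\<integral>\<^sup>+ b. (\<integral>\<^sup>+ u. ennreal ((fnet m u b v)\<^sup>2) \<partial>Umeas m) \<partial>?G)"
    unfolding init_measure_def using P.nn_integral_snd[OF meas] by simp
  also have "\<dots> = (\<integral>\<^sup>+ b. ennreal (\<Sum>j<m. (c b j)\<^sup>2) \<partial>?G)"
    by (simp add: fc rad_sq)
  also have "\<dots> \<le> (\<integral>\<^sup>+ b. (\<Sum>j<m. \<Sum>i\<in>UNIV. ennreal (1 / real m) * ennreal ((b j i)\<^sup>2)) \<partial>?G)"
  proof (rule nn_integral_mono)
    fix b
    have "(\<Sum>j<m. (c b j)\<^sup>2) \<le> (\<Sum>j<m. \<Sum>i\<in>UNIV. (b j i)\<^sup>2 / real m)"
      by (rule sum_mono) (rule cb)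
    then have "ennreal (\<Sum>j<m. (c b j)\<^sup>2) \<le> ennreal (\<Sum>j<m. \<Sum>i\<in>UNIV. (b j i)\<^sup>2 / real m)"
      by (rule ennreal_leI)
    also have "\<dots> = (\<Sum>j<m. \<Sum>i\<in>UNIV. ennreal (1 / real m) * ennreal ((b j i)\<^sup>2))"
      by (simp add: sum_nonneg ennreal_mult[symmetric] sum_ennreal[symmetric] del: sum_ennreal)
    finally show "ennreal (\<Sum>j<m. (c b j)\<^sup>2) \<le> (\<Sum>j<m. \<Sum>i\<in>UNIV. ennreal (1 / real m) * ennreal ((b j i)\<^sup>2))" .
  qed
  also have "\<dots> = (\<Sum>j<m. \<Sum>i\<in>UNIV. ennreal (1 / real m) * (\<integral>\<^sup>+ b. ennreal ((b j i)\<^sup>2) \<partial>?G))"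
  proof -
    note mG[measurable]
    have m1: "(\<lambda>b. ennreal (1 / real m) * ennreal ((b j i)\<^sup>2)) \<in> borel_measurable ?G" for j i
      by measurable
    have m2: "(\<lambda>b. \<Sum>i\<in>UNIV. ennreal (1 / real m) * ennreal ((b j i)\<^sup>2)) \<in> borel_measurable ?G" for j
      by measurable
    have "(\<integral>\<^sup>+ b. (\<Sum>j<m. \<Sum>i\<in>UNIV. ennreal (1 / real m) * ennreal ((b j i)\<^sup>2)) \<partial>?G)
       = (\<Sum>j<m. \<integral>\<^sup>+ b. (\<Sum>i\<in>UNIV. ennreal (1 / real m) * ennreal ((b j i)\<^sup>2)) \<partial>?G)"
      by (rule nn_integral_sum) (rule m2)
    also have "\<dots> = (\<Sum>j<m. \<Sum>i\<in>UNIV. \<integral>\<^sup>+ b. ennreal (1 / real m) * ennreal ((b j i)\<^sup>2) \<partial>?G)"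
      by (intro sum.cong refl nn_integral_sum m1)
    also have "\<dots> = (\<Sum>j<m. \<Sum>i\<in>UNIV. ennreal (1 / real m) * (\<integral>\<^sup>+ b. ennreal ((b j i)\<^sup>2) \<partial>?G))"
      by (intro sum.cong refl nn_integral_cmult) measurable
    finally show ?thesis .
  qed
  also have "\<dots> = (\<Sum>j<m. \<Sum>i\<in>(UNIV::'d set). ennreal (1 / real m) * ennreal (1 / real CARD('d)))"
    by (intro sum.cong refl) (simp add: gauss_comp)
  also have "\<dots> = ennreal (real m * (real CARD('d) * (1 / real m * (1 / real CARD('d)))))"
    by (simp add: ennreal_mult[symmetric] ennreal_of_nat_eq_real_of_nat)
  also have "\<dots> \<le> 1"
    by (cases "m = 0") auto
  finally show ?thesis .
qed

lemma pred_in_simplex[measurable]: "Measurable.pred borel (in_simplex :: ('s::finite \<Rightarrow> real) \<Rightarrow> bool)"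
  unfolding in_simplex_def by measurable

lemma kernel_meas:
  fixes P :: "'s::finite \<times> ('s \<Rightarrow> real) \<times> 'a::finite \<Rightarrow> ('s \<times> ('s \<Rightarrow> real)) measure"
  assumes P_kernel: "P \<in> measurable triple_space (prob_algebra sd_space)"
    and pi_kernel: "\<pi> \<in> measurable sd_space (prob_algebra (count_space UNIV))"
  shows "(\<lambda>t. P t \<bind> (\<lambda>(s', d'). \<pi> (s', d') \<bind>
        (\<lambda>a'. return (triple_space \<Otimes>\<^sub>M triple_space) (t, (s', d', a')))))
     \<in> measurable triple_space (subprob_algebra (triple_space \<Otimes>\<^sub>M triple_space))"
proof -
  have P[measurable]: "P \<in> measurable triple_space (subprob_algebra sd_space)"
    using P_kernel by (rule measurable_prob_algebraD)
  have pi[measurable]: "\<pi> \<in> measurable sd_space (subprob_algebra (count_space UNIV))"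
    using pi_kernel by (rule measurable_prob_algebraD)
  show ?thesis
    unfolding triple_space_def sd_space_def
    apply (rule measurable_bind')
     apply (rule P[unfolded triple_space_def sd_space_def])
    apply (simp add: case_prod_beta')
    apply (rule measurable_bind')
     apply (rule measurable_compose[OF measurable_snd pi[unfolded sd_space_def]])
    apply measurable
    done
qed

lemma fsnd_meas[measurable]: "(\<lambda>t. fst (snd t)) \<in> measurable (triple_space :: ('s::finite \<times> ('s \<Rightarrow> real) \<times> 'a::finite) measure) borel"
  unfolding triple_space_def by measurable

lemma Q_meas[measurable]: "Measurable.pred (triple_space \<Otimes>\<^sub>M triple_space)
   (\<lambda>z::('s::finite \<times> ('s \<Rightarrow> real) \<times> 'a::finite) \<times> ('s \<times> ('s \<Rightarrow> real) \<times> 'a). in_simplex (fst (snd (fst z))) \<and> in_simplex (fst (snd (snd z))))"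
  by measurable

lemma data_facts:
  fixes P :: "'s::finite \<times> ('s \<Rightarrow> real) \<times> 'a::finite \<Rightarrow> ('s \<times> ('s \<Rightarrow> real)) measure"
  assumes rho_prob: "prob_space \<rho>" and rho_sets: "sets \<rho> = sets triple_space"
    and rho_simplex: "AE t in \<rho>. in_simplex (fst (snd t))"
    and P_kernel: "P \<in> measurable triple_space (prob_algebra sd_space)"
    and P_simplex: "\<And>t. t \<in> space triple_space \<Longrightarrow> AE y in P t. in_simplex (snd y)"
    and pi_kernel: "\<pi> \<in> measurable sd_space (prob_algebra (count_space UNIV))"
  shows "subprob_space (data_measure \<rho> P \<pi>)"
    "AE z in data_measure \<rho> P \<pi>. in_simplex (fst (snd (fst z))) \<and> in_simplex (fst (snd (snd z)))"
proof -
  have K: "(\<lambda>t. P t \<bind> (\<lambda>(s', d'). \<pi> (s', d') \<bind>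
        (\<lambda>a'. return (triple_space \<Otimes>\<^sub>M triple_space) (t, (s', d', a')))))
     \<in> measurable \<rho> (subprob_algebra (triple_space \<Otimes>\<^sub>M triple_space))"
    using kernel_meas[OF P_kernel pi_kernel] by (simp add: measurable_cong_sets[OF rho_sets refl])
  show "subprob_space (data_measure \<rho> P \<pi>)"
    unfolding data_measure_def
    by (rule subprob_space_bind[OF _ K]) (use rho_prob prob_space_imp_subprob_space in blast)
  have P[measurable]: "P \<in> measurable triple_space (subprob_algebra sd_space)"
    using P_kernel by (rule measurable_prob_algebraD)
  have pi[measurable]: "\<pi> \<in> measurable sd_space (subprob_algebra (count_space UNIV))"
    using pi_kernel by (rule measurable_prob_algebraD)
  show "AE z in data_measure \<rho> P \<pi>. in_simplex (fst (snd (fst z))) \<and> in_simplex (fst (snd (snd z)))"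
    unfolding data_measure_def
    apply (subst AE_bind[OF K Q_meas])
    using rho_simplex
  proof eventually_elim
    case (elim t)
    have sP: "sets (P t) = sets sd_space"
      by (rule sets_kernel[OF P]) (simp add: triple_space_def space_pair_measure)
    have K2: "(\<lambda>(s', d'). \<pi> (s', d') \<bind> (\<lambda>a'. return (triple_space \<Otimes>\<^sub>M triple_space) (t, (s', d', a'))))
       \<in> measurable (P t) (subprob_algebra (triple_space \<Otimes>\<^sub>M triple_space))"
      unfolding measurable_cong_sets[OF sP refl] 
      apply (simp add: case_prod_beta')
      apply (rule measurable_bind')
       apply (rule pi)
      unfolding triple_space_def sd_space_def
      apply measurable
      apply (simp add: space_pair_measure)
      apply (rule measurable_Pair)
       apply measurable
      done
    have hP: "AE y in P t. in_simplex (snd y)"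
      using P_simplex[of t] by (simp add: triple_space_def space_pair_measure)
    have "AE y in P t. AE z in (\<lambda>(s', d'). \<pi> (s', d') \<bind> (\<lambda>a'. return (triple_space \<Otimes>\<^sub>M triple_space) (t, (s', d', a')))) y.
       in_simplex (fst (snd (fst z))) \<and> in_simplex (fst (snd (snd z)))"
      using hP
    proof eventually_elim
      case (elim y)
      obtain s' d' where y: "y = (s', d')" by (cases y)
      have sPi: "sets (\<pi> y) = sets (count_space UNIV)"
        by (rule sets_kernel[OF pi]) (simp add: sd_space_def space_pair_measure)
      have K3: "(\<lambda>a'. return (triple_space \<Otimes>\<^sub>M triple_space) (t, (s', d', a')))
          \<in> measurable (\<pi> y) (subprob_algebra (triple_space \<Otimes>\<^sub>M triple_space))"
        unfolding measurable_cong_sets[OF sPi refl] triple_space_def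
        by measurable (auto simp: space_pair_measure measurable_count_space_eq1)
      show ?case
        unfolding y split
        apply (subst AE_bind[OF K3[unfolded y] Q_meas])
        apply (rule AE_I2)
        apply (subst AE_return)
        using elim y \<open>in_simplex (fst (snd t))\<close>
        by (auto simp: triple_space_def space_pair_measure)
    qed
    then show ?case by (subst AE_bind[OF K2 Q_meas])
  qed
qed

lemma AE_u: "AE w in (init_measure m :: ((nat \<Rightarrow> real) \<times> (nat \<Rightarrow> 'd::finite \<Rightarrow> real)) measure). \<forall>j<m. fst w j \<in> {-1, 1}"
proof -
  let ?G = "PiM {..<m} (\<lambda>_. gauss_init :: ('d \<Rightarrow> real) measure)"
  have pU: "prob_space (Umeas m)" by (rule prob_space_PiM) (rule prob_space_measure_pmf)
  have pG: "prob_space ?G" by (rule prob_space_PiM) (rule prob_gauss_init)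
  have AU: "AE u in Umeas m. \<forall>j\<in>{..<m}. u j \<in> {-1, 1}"
  proof (rule eventually_ball_finite[OF finite_lessThan], intro ballI)
    fix j assume j: "j \<in> {..<m}"
    show "AE u in Umeas m. u j \<in> {-1, 1}"
      by (rule AE_PiM_component[OF _ j]) (auto simp: prob_space_measure_pmf AE_measure_pmf_iff)
  qed
  have eq: "distr (Umeas m \<Otimes>\<^sub>M ?G) (Umeas m) fst = Umeas m"
    by (rule prob_space.distr_pair_fst[OF pG])
  have "AE w in distr (Umeas m \<Otimes>\<^sub>M ?G) (Umeas m) fst. \<forall>j\<in>{..<m}. w j \<in> {-1, 1}"
    unfolding eq by (rule AU)
  then have "AE w in Umeas m \<Otimes>\<^sub>M ?G. \<forall>j\<in>{..<m}. fst w j \<in> {-1, 1}"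
    by (rule AE_distrD[OF measurable_fst])
  then show ?thesis unfolding init_measure_def by auto
qed

theorem lemma6:
  fixes \<phi> :: "'s::finite \<Rightarrow> 's \<Rightarrow> 'a::finite \<Rightarrow> 'd::finite \<Rightarrow> real"
    and \<rho> :: "('s \<times> ('s \<Rightarrow> real) \<times> 'a) measure"
    and P :: "'s \<times> ('s \<Rightarrow> real) \<times> 'a \<Rightarrow> ('s \<times> ('s \<Rightarrow> real)) measure"
    and \<pi> :: "'s \<times> ('s \<Rightarrow> real) \<Rightarrow> 'a measure"
    and \<tau> \<mu> \<tau>\<^sub>1 \<tau>\<^sub>2 \<tau>\<^sub>3 :: real
  assumes feat_norm: "\<And>s x a. (\<Sum>i\<in>UNIV. (\<phi> s x a i)\<^sup>2) \<le> 1"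
    and rho_prob: "prob_space \<rho>" and rho_sets: "sets \<rho> = sets triple_space"
    and rho_simplex: "AE t in \<rho>. in_simplex (fst (snd t))"
    and P_kernel: "P \<in> measurable triple_space (prob_algebra sd_space)"
    and P_simplex: "\<And>t. t \<in> space triple_space \<Longrightarrow> AE y in P t. in_simplex (snd y)"
    and pi_kernel: "\<pi> \<in> measurable sd_space (prob_algebra (count_space UNIV))"
    and tau_nonneg: "\<tau> \<ge> 0" and mu_range: "0 \<le> \<mu>" "\<mu> < 1"
    and taus_nonneg: "\<tau>\<^sub>1 \<ge> 0" "\<tau>\<^sub>2 \<ge> 0" "\<tau>\<^sub>3 \<ge> 0"
  shows "\<exists>C::real. \<forall>(m::nat) (R::real) (\<xi>::'s \<times> ('s \<Rightarrow> real) \<times> 'a \<Rightarrow> real)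
            (B::(nat \<Rightarrow> real) \<times> (nat \<Rightarrow> 'd \<Rightarrow> real) \<Rightarrow> (nat \<Rightarrow> 'd \<Rightarrow> real)).
      R \<ge> 0
      \<longrightarrow> \<xi> \<in> borel_measurable triple_space
      \<longrightarrow> (\<forall>u b0 s d a. (\<forall>j<m. u j \<in> {-1, 1}) \<longrightarrow> in_simplex d \<longrightarrow>
             (\<xi> (s, d, a))\<^sup>2 \<le> \<tau>\<^sub>1 * (\<Sum>x\<in>UNIV. d x * (fnet m u b0 (\<phi> s x a))\<^sup>2)
                                + \<tau>\<^sub>2 * R\<^sup>2 + \<tau>\<^sub>3)
      \<longrightarrow> (\<forall>w\<in>space (init_measure m).
             sqrt (par_sqnorm m (\<lambda>j i. B w j i - snd w j i)) \<le> R)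
      \<longrightarrow> (\<integral>\<^sup>+ w. (\<integral>\<^sup>+ z.
              ennreal (par_sqnorm m (\<lambda>j i.
                 gvec \<phi> \<tau> \<mu> \<xi> m (fst w) (B w) z j i
                 - gbar \<phi> \<tau> \<mu> \<xi> m (fst w) (B w) (data_measure \<rho> P \<pi>) j i))
            \<partial>(data_measure \<rho> P \<pi>)) \<partial>(init_measure m))
          \<le> ennreal (C * (1 + R\<^sup>2))"

proof -
  define N where "N = real CARD('s) * (real CARD('a) * real CARD('s))"
  define Cd where "Cd = real CARD('d)"
  have N0: "0 \<le> N" and Cd0: "0 \<le> Cd" by (simp_all add: N_def Cd_def)
  show ?thesis
  proof (intro exI[of _ "12 * Cd * (4 * N + \<tau>\<^sup>2 * \<tau>\<^sub>2 + \<tau>\<^sup>2 * \<tau>\<^sub>3)"] allI impI)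
    fix m :: nat and R :: real and \<xi> :: "'s \<times> ('s \<Rightarrow> real) \<times> 'a \<Rightarrow> real"
      and B :: "(nat \<Rightarrow> real) \<times> (nat \<Rightarrow> 'd \<Rightarrow> real) \<Rightarrow> (nat \<Rightarrow> 'd \<Rightarrow> real)"
    assume R0: "R \<ge> 0" and xi_meas: "\<xi> \<in> borel_measurable triple_space"
      and xiH: "\<forall>u b0 s d a. (\<forall>j<m. u j \<in> {-1, 1}) \<longrightarrow> in_simplex d \<longrightarrow>
             (\<xi> (s, d, a))\<^sup>2 \<le> \<tau>\<^sub>1 * (\<Sum>x\<in>UNIV. d x * (fnet m u b0 (\<phi> s x a))\<^sup>2)
                                + \<tau>\<^sub>2 * R\<^sup>2 + \<tau>\<^sub>3"
      and BH: "\<forall>w\<in>space (init_measure m). sqrt (par_sqnorm m (\<lambda>j i. B w j i - snd w j i)) \<le> R"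
    let ?D = "data_measure \<rho> P \<pi>"
    let ?I = "init_measure m :: ((nat \<Rightarrow> real) \<times> (nat \<Rightarrow> 'd \<Rightarrow> real)) measure"
    have sp: "subprob_space ?D"
      and AE_D: "AE z in ?D. in_simplex (fst (snd (fst z))) \<and> in_simplex (fst (snd (snd z)))"
      using data_facts[OF rho_prob rho_sets rho_simplex P_kernel P_simplex pi_kernel] by auto
    define X where "X = \<tau>\<^sub>2 * R\<^sup>2 + \<tau>\<^sub>3"
    have X0: "0 \<le> X" using taus_nonneg by (simp add: X_def)
    have xi: "\<forall>s d a. in_simplex (d :: 's \<Rightarrow> real) \<longrightarrow> (\<xi> (s, d, a))\<^sup>2 \<le> X"
    proof (intro allI impI)
      fix s and d :: "'s \<Rightarrow> real" and a assume d: "in_simplex d"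
      have z: "fnet m (\<lambda>_. 1) (\<lambda>_ _. 0) v = 0" for v :: "'d \<Rightarrow> real"
        by (simp add: fnet_def relu_def inner_d_def)
      show "(\<xi> (s, d, a))\<^sup>2 \<le> X"
        using spec[OF spec[OF spec[OF spec[OF spec[OF xiH, of "\<lambda>_. 1"], of "\<lambda>_ _. 0"], of s], of d], of a] d by (simp add: z X_def)
    qed
    have mu: "\<bar>\<mu>\<bar> \<le> 1" using mu_range by simp
    define S0 where "S0 w = (\<Sum>s\<in>UNIV. \<Sum>a\<in>UNIV. \<Sum>x\<in>UNIV. (fnet m (fst w) (snd w) (\<phi> s x a))\<^sup>2)"
      for w :: "(nat \<Rightarrow> real) \<times> (nat \<Rightarrow> 'd \<Rightarrow> real)"
    define A where "A = 12 * Cd * (4 * N * R\<^sup>2 + \<tau>\<^sup>2 * X)"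
    have A0: "0 \<le> A" using N0 Cd0 X0 by (simp add: A_def)
    have AEu: "AE w in ?I. \<forall>j<m. fst w j \<in> {-1, 1}"
      by (rule AE_u)
    have pw: "AE w in ?I.
        (\<integral>\<^sup>+ z. ennreal (par_sqnorm m (\<lambda>j i.
                 gvec \<phi> \<tau> \<mu> \<xi> m (fst w) (B w) z j i
                 - gbar \<phi> \<tau> \<mu> \<xi> m (fst w) (B w) ?D j i)) \<partial>?D)
        \<le> ennreal A + ennreal (48 * Cd) * ennreal (S0 w)"
      using AEu AE_space
    proof eventually_elim
      case (elim w)
      have u: "\<forall>j<m. \<bar>fst w j\<bar> \<le> 1" using elim by auto
      have pR: "par_sqnorm m (\<lambda>j i. B w j i - snd w j i) \<le> R\<^sup>2"
      proof -
        have "sqrt (par_sqnorm m (\<lambda>j i. B w j i - snd w j i)) \<le> R" using BH elim by auto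
        moreover have "0 \<le> par_sqnorm m (\<lambda>j i. B w j i - snd w j i)"
          by (simp add: par_sqnorm_def sum_nonneg)
        ultimately show ?thesis using R0 by (metis real_sqrt_le_iff real_sqrt_pow2 power_mono real_sqrt_ge_zero)
      qed
      define T where "T = (\<Sum>s\<in>UNIV. \<Sum>a\<in>UNIV. \<Sum>x\<in>UNIV. 2 * (fnet m (fst w) (snd w) (\<phi> s x a))\<^sup>2 + 2 * R\<^sup>2)"
      have fB: "(fnet m (fst w) (B w) (\<phi> s x a))\<^sup>2 \<le> 2 * (fnet m (fst w) (snd w) (\<phi> s x a))\<^sup>2 + 2 * R\<^sup>2" for s x a
      proof -
        have l: "(fnet m (fst w) (B w) (\<phi> s x a) - fnet m (fst w) (snd w) (\<phi> s x a))\<^sup>2 \<le> R\<^sup>2"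
          using fnet_lip[OF u feat_norm[of s x a], of "B w" "snd w"] pR by linarith
        have "(fnet m (fst w) (B w) (\<phi> s x a))\<^sup>2 \<le> 2 * (fnet m (fst w) (snd w) (\<phi> s x a))\<^sup>2
           + 2 * (fnet m (fst w) (B w) (\<phi> s x a) - fnet m (fst w) (snd w) (\<phi> s x a))\<^sup>2"
          using sum_squares_ge_zero[of "fnet m (fst w) (B w) (\<phi> s x a) - 2 * fnet m (fst w) (snd w) (\<phi> s x a)" 0]
          by (simp add: power2_eq_square algebra_simps)
        then show ?thesis using l by linarith
      qed
      have T: "\<forall>s a. (\<Sum>x\<in>UNIV. (fnet m (fst w) (B w) (\<phi> s x a))\<^sup>2) \<le> T"
      proof (intro allI)
        fix s a
        have "(\<Sum>x\<in>UNIV. (fnet m (fst w) (B w) (\<phi> s x a))\<^sup>2)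
            \<le> (\<Sum>x\<in>UNIV. 2 * (fnet m (fst w) (snd w) (\<phi> s x a))\<^sup>2 + 2 * R\<^sup>2)"
          by (rule sum_mono) (rule fB)
        also have "\<dots> \<le> (\<Sum>a\<in>UNIV. \<Sum>x\<in>UNIV. 2 * (fnet m (fst w) (snd w) (\<phi> s x a))\<^sup>2 + 2 * R\<^sup>2)"
          by (rule member_le_sum[where f="\<lambda>a. \<Sum>x\<in>UNIV. 2 * (fnet m (fst w) (snd w) (\<phi> s x a))\<^sup>2 + 2 * R\<^sup>2"])
             (auto intro: sum_nonneg)
        also have "\<dots> \<le> T"
          unfolding T_def
          by (rule member_le_sum[where f="\<lambda>s. \<Sum>a\<in>UNIV. \<Sum>x\<in>UNIV. 2 * (fnet m (fst w) (snd w) (\<phi> s x a))\<^sup>2 + 2 * R\<^sup>2"])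
             (auto intro!: sum_nonneg)
        finally show "(\<Sum>x\<in>UNIV. (fnet m (fst w) (B w) (\<phi> s x a))\<^sup>2) \<le> T" .
      qed
      have T0: "0 \<le> T" unfolding T_def by (auto intro!: sum_nonneg)
      have TS: "T = 2 * S0 w + 2 * N * R\<^sup>2"
        by (simp add: T_def S0_def N_def sum.distrib sum_distrib_left algebra_simps)
      have "(\<integral>\<^sup>+ z. ennreal (par_sqnorm m (\<lambda>j i.
                 gvec \<phi> \<tau> \<mu> \<xi> m (fst w) (B w) z j i
                 - gbar \<phi> \<tau> \<mu> \<xi> m (fst w) (B w) ?D j i)) \<partial>?D)
          \<le> ennreal (4 * real CARD('d) * (3 * (2 * T + \<tau>\<^sup>2 * X)))"
        by (rule inner_bound[OF feat_norm sp AE_D u xi mu T X0 T0])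
      also have "4 * real CARD('d) * (3 * (2 * T + \<tau>\<^sup>2 * X)) = A + 48 * Cd * S0 w"
        by (simp add: TS A_def Cd_def algebra_simps)
      also have "ennreal (A + 48 * Cd * S0 w) = ennreal A + ennreal (48 * Cd) * ennreal (S0 w)"
        using A0 Cd0 by (simp add: ennreal_plus ennreal_mult S0_def sum_nonneg)
      finally show ?case .
    qed
    have pI: "prob_space ?I"
    proof -
      have pU: "prob_space (Umeas m)" by (rule prob_space_PiM) (rule prob_space_measure_pmf)
      have pG: "prob_space (PiM {..<m} (\<lambda>_. gauss_init :: ('d \<Rightarrow> real) measure))"
        by (rule prob_space_PiM) (rule prob_gauss_init)
      show ?thesis unfolding init_measure_def by (rule prob_space_pair[OF pU pG])
    qed
    have S0m: "(\<lambda>w. ennreal (S0 w)) \<in> borel_measurable ?I"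
      unfolding S0_def by measurable
    have S0_int: "(\<integral>\<^sup>+ w. ennreal (S0 w) \<partial>?I) \<le> ennreal N"
    proof -
      have "(\<integral>\<^sup>+ w. ennreal (S0 w) \<partial>?I)
          = (\<integral>\<^sup>+ w. (\<Sum>s\<in>UNIV. \<Sum>a\<in>UNIV. \<Sum>x\<in>UNIV. ennreal ((fnet m (fst w) (snd w) (\<phi> s x a))\<^sup>2)) \<partial>?I)"
        by (simp add: S0_def sum_nonneg)
      also have "\<dots> = (\<Sum>s\<in>UNIV. \<integral>\<^sup>+ w. (\<Sum>a\<in>UNIV. \<Sum>x\<in>UNIV. ennreal ((fnet m (fst w) (snd w) (\<phi> s x a))\<^sup>2)) \<partial>?I)"
        by (rule nn_integral_sum) measurable
      also have "\<dots> = (\<Sum>s\<in>UNIV. \<Sum>a\<in>UNIV. \<integral>\<^sup>+ w. (\<Sum>x\<in>UNIV. ennreal ((fnet m (fst w) (snd w) (\<phi> s x a))\<^sup>2)) \<partial>?I)"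
        by (intro sum.cong refl nn_integral_sum) measurable
      also have "\<dots> = (\<Sum>s\<in>UNIV. \<Sum>a\<in>UNIV. \<Sum>x\<in>UNIV. \<integral>\<^sup>+ w. ennreal ((fnet m (fst w) (snd w) (\<phi> s x a))\<^sup>2) \<partial>?I)"
        by (intro sum.cong refl nn_integral_sum) measurable
      also have "\<dots> \<le> (\<Sum>s\<in>(UNIV::'s set). \<Sum>a\<in>(UNIV::'a set). \<Sum>x\<in>(UNIV::'s set). (1::ennreal))"
        by (intro sum_mono fnet_init feat_norm)
      also have "\<dots> = ennreal N"
        by (simp add: N_def ennreal_of_nat_eq_real_of_nat ennreal_mult)
      finally show ?thesis .
    qed
    have "(\<integral>\<^sup>+ w. (\<integral>\<^sup>+ z.
              ennreal (par_sqnorm m (\<lambda>j i.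
                 gvec \<phi> \<tau> \<mu> \<xi> m (fst w) (B w) z j i
                 - gbar \<phi> \<tau> \<mu> \<xi> m (fst w) (B w) ?D j i))
            \<partial>?D) \<partial>(init_measure m))
        \<le> (\<integral>\<^sup>+ w. ennreal A + ennreal (48 * Cd) * ennreal (S0 w) \<partial>?I)"
      by (rule nn_integral_mono_AE[OF pw])
    also have "\<dots> = ennreal A * emeasure ?I (space ?I)
        + ennreal (48 * Cd) * (\<integral>\<^sup>+ w. ennreal (S0 w) \<partial>?I)"
      using S0m by (simp add: nn_integral_add nn_integral_cmult)
    also have "\<dots> \<le> ennreal A + ennreal (48 * Cd) * ennreal N"
      using S0_int prob_space.emeasure_space_1[OF pI] by (simp add: mult_left_mono)
    also have "\<dots> \<le> ennreal (12 * Cd * (4 * N + \<tau>\<^sup>2 * \<tau>\<^sub>2 + \<tau>\<^sup>2 * \<tau>\<^sub>3) * (1 + R\<^sup>2))"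
    proof -
      have "ennreal A + ennreal (48 * Cd) * ennreal N = ennreal (A + 48 * Cd * N)"
        using A0 Cd0 N0 by (simp add: ennreal_plus ennreal_mult)
      moreover have "A + 48 * Cd * N \<le> 12 * Cd * (4 * N + \<tau>\<^sup>2 * \<tau>\<^sub>2 + \<tau>\<^sup>2 * \<tau>\<^sub>3) * (1 + R\<^sup>2)"
      proof -
        have "0 \<le> 12 * Cd * (\<tau>\<^sup>2 * \<tau>\<^sub>2 + \<tau>\<^sup>2 * \<tau>\<^sub>3 * R\<^sup>2)"
          using Cd0 taus_nonneg by (intro mult_nonneg_nonneg add_nonneg_nonneg) auto
        moreover have "12 * Cd * (4 * N + \<tau>\<^sup>2 * \<tau>\<^sub>2 + \<tau>\<^sup>2 * \<tau>\<^sub>3) * (1 + R\<^sup>2)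
            = (A + 48 * Cd * N) + 12 * Cd * (\<tau>\<^sup>2 * \<tau>\<^sub>2 + \<tau>\<^sup>2 * \<tau>\<^sub>3 * R\<^sup>2)"
          by (simp add: A_def X_def algebra_simps)
        ultimately show ?thesis by linarith
      qed
      ultimately show ?thesis by (simp add: ennreal_leI)
    qed
    finally show "(\<integral>\<^sup>+ w. (\<integral>\<^sup>+ z.
              ennreal (par_sqnorm m (\<lambda>j i.
                 gvec \<phi> \<tau> \<mu> \<xi> m (fst w) (B w) z j i
                 - gbar \<phi> \<tau> \<mu> \<xi> m (fst w) (B w) ?D j i))
            \<partial>?D) \<partial>(init_measure m))
          \<le> ennreal (12 * Cd * (4 * N + \<tau>\<^sup>2 * \<tau>\<^sub>2 + \<tau>\<^sup>2 * \<tau>\<^sub>3) * (1 + R\<^sup>2))" .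
  qed
qed

end
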